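(* Let $V$ be a set of $n$ vertices, $k$ a positive integer, $u,w\in V$ distinct, and $V_{uw}\subseteq V\setminus\{u,w\}$ a set of $k$ vertices partitioned as $V_{uw}=V_u\cup V_w$ with $V_u=\{v_1,\ldots,v_s\}$ and $V_w=\{v_{s+1},\ldots,v_k\}$. Let $t$ be a spanning tree of the complete graph on $V$ with at most $k$ leaves (vertices of degree $1$) such that each vertex of $V_u$ is adjacent in $t$ only to $u$, and each vertex of $V_w$ is adjacent in $t$ only to $w$. Let $t_h$ be the graph obtained from $t$ by deleting the vertices $v_1,\ldots,v_k$ together with their incident edges. Then $t_h$ is a Hamiltonian path on the $n-k$ vertices of $V\setminus V_{uw}$. *)

theory Defs
  imports Main
begin

text \<open>Simple graphs with vertex set V are given by edge sets E of 2-element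
  subsets of V (i.e. subgraphs of the complete graph on V).\<close>

definition graph_on :: "'a set \<Rightarrow> 'a set set \<Rightarrow> bool" where
  "graph_on V E \<longleftrightarrow> E \<subseteq> {{x, y} | x y. x \<in> V \<and> y \<in> V \<and> x \<noteq> y}"

definition connected_on :: "'a set \<Rightarrow> 'a set set \<Rightarrow> bool" where
  "connected_on V E \<longleftrightarrow> (\<forall>x\<in>V. \<forall>y\<in>V. (x, y) \<in> {(a, b). {a, b} \<in> E}\<^sup>*)"

definition is_cycle :: "'a set set \<Rightarrow> 'a list \<Rightarrow> bool" where
  "is_cycle E cs \<longleftrightarrow> length cs \<ge> 3 \<and> distinct cs \<and>
     (\<forall>i. Suc i < length cs \<longrightarrow> {cs ! i, cs ! Suc i} \<in> E) \<and> {last cs, hd cs} \<in> E"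

definition acyclic_graph :: "'a set set \<Rightarrow> bool" where
  "acyclic_graph E \<longleftrightarrow> \<not> (\<exists>cs. is_cycle E cs)"

definition spanning_tree :: "'a set \<Rightarrow> 'a set set \<Rightarrow> bool" where
  "spanning_tree V E \<longleftrightarrow> graph_on V E \<and> connected_on V E \<and> acyclic_graph E"

definition degree :: "'a set set \<Rightarrow> 'a \<Rightarrow> nat" where
  "degree E x = card {e \<in> E. x \<in> e}"

definition leaves :: "'a set \<Rightarrow> 'a set set \<Rightarrow> 'a set" where
  "leaves V E = {x \<in> V. degree E x = 1}"

definition delete_vertices :: "'a set set \<Rightarrow> 'a set \<Rightarrow> 'a set set" where
  "delete_vertices E S = {e \<in> E. e \<inter> S = {}}"

definition hamiltonian_path :: "'a set \<Rightarrow> 'a set set \<Rightarrow> bool" where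
  "hamiltonian_path W E \<longleftrightarrow> (\<exists>ps. distinct ps \<and> set ps = W \<and>
      E = {{ps ! i, ps ! Suc i} | i. Suc i < length ps})"

end

theory Submission
  imports Defs
begin

lemma edgeW: "graph_on W E \<Longrightarrow> {x,y} \<in> E \<Longrightarrow> x \<in> W \<and> y \<in> W \<and> x \<noteq> y"
  unfolding graph_on_def by (auto simp: doubleton_eq_iff)

lemma edge_form: "graph_on W E \<Longrightarrow> e \<in> E \<Longrightarrow> x \<in> e \<Longrightarrow> \<exists>y. e = {x,y}"
  unfolding graph_on_def by auto

lemma succ_W: "successively (\<lambda>x y. {x,y} \<in> E) xs \<Longrightarrow> graph_on W E \<Longrightarrow> length xs \<ge> 2 \<Longrightarrow> set xs \<subseteq> W"
proof (induction xs rule: induct_list012)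
  case (3 x y zs)
  then show ?case using edgeW[OF 3(4), of x y] by (cases zs) auto
qed auto

lemma cyc: "distinct c \<Longrightarrow> successively (\<lambda>x y. {x,y} \<in> E) c \<Longrightarrow> length c \<ge> 3 \<Longrightarrow> {last c, hd c} \<in> E \<Longrightarrow> \<not> acyclic_graph E"
  unfolding acyclic_graph_def is_cycle_def successively_conv_nth by blast

lemma succ_sym: "successively (\<lambda>x y. {x,y} \<in> E) xs \<Longrightarrow> successively (\<lambda>x y. {x,y} \<in> E) (rev xs)"
  by (simp add: insert_commute)


lemma ext:
  fixes ps :: "'a list"
  assumes fin: "finite W" and g: "graph_on W E" and acyc: "acyclic_graph E"
    and dps: "distinct ps" and sps: "successively (\<lambda>x y. {x,y} \<in> E) ps" and j: "j < length ps"
    and a: "a \<notin> set ps" and ab: "{ps!j, a} \<in> E"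
  shows "\<exists>r. r \<noteq> [] \<and> set r \<inter> set ps = {} \<and> distinct (take (Suc j) ps @ r)
     \<and> successively (\<lambda>x y. {x,y} \<in> E) (take (Suc j) ps @ r) \<and> degree E (last r) = 1 \<and> last r \<in> W"
proof -
  define R where "R = (\<lambda>x y. {x,y} \<in> E)"
  define T where "T = take (Suc j) ps"
  define b where "b = ps ! j"
  have psd: "ps = take j ps @ b # drop (Suc j) ps" unfolding b_def using j by (simp add: id_take_nth_drop)
  have Tb: "T = take j ps @ [b]" unfolding T_def b_def using j by (simp add: take_Suc_conv_app_nth)
  have setps: "set ps = set T \<union> set (drop (Suc j) ps)" unfolding T_def
    by (metis append_take_drop_id set_append)
  have dT: "distinct T" using dps T_def by simp
  have sT: "successively R T" using sps unfolding R_def T_def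
    by (metis append_take_drop_id successively_append_iff)
  define C where "C = {r. r \<noteq> [] \<and> set r \<inter> set ps = {} \<and> distinct (T @ r) \<and> successively R (T @ r)}"
  have CW: "C \<subseteq> {r. set r \<subseteq> W \<and> distinct r}"
  proof
    fix r assume "r \<in> C"
    hence "successively R (T @ r)" "r \<noteq> []" unfolding C_def by auto
    moreover have "length (T @ r) \<ge> 2" using \<open>r \<noteq> []\<close> Tb by (cases r) auto
    ultimately have "set (T @ r) \<subseteq> W" using succ_W[OF _ g, of "T @ r"] unfolding R_def by blast
    thus "r \<in> {r. set r \<subseteq> W \<and> distinct r}" using \<open>r \<in> C\<close> unfolding C_def by auto
  qed
  have finC: "finite C" using finite_subset[OF CW finite_subset_distinct[OF fin]] .
  have aC: "[a] \<in> C" unfolding C_def using a dT sT ab setps unfolding R_def Tb b_def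
    by (auto simp: successively_append_iff)
  obtain r where rC: "r \<in> C" and rmax: "\<And>r'. r' \<in> C \<Longrightarrow> length r' \<le> length r"
  proof -
    have "Max (length ` C) \<in> length ` C" using finC aC by (intro Max_in) auto
    then obtain r where "r \<in> C" "length r = Max (length ` C)" by auto
    thus ?thesis using that finC by auto
  qed
  define e where "e = last r"
  have rne: "r \<noteq> []" and rdisj: "set r \<inter> set ps = {}" and dL: "distinct (T @ r)" and sL: "successively R (T @ r)"
    using rC unfolding C_def by auto
  obtain L0 p where L: "T @ r = L0 @ [p, e]"
  proof -
    have "T @ r = (T @ butlast r) @ [e]" using rne unfolding e_def by simp
    moreover have "T @ butlast r = butlast (T @ butlast r) @ [last (T @ butlast r)]" using Tb by (metis append_butlast_last_id append_is_Nil_conv not_Cons_self2)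
    ultimately show ?thesis using that by (metis append.assoc append_Cons append_Nil)
  qed
  have pe: "{p, e} \<in> E" using sL unfolding L R_def by (simp add: successively_append_iff)
  have eW: "e \<in> W" using edgeW[OF g pe] by simp
  have nb: "y = p" if ey: "{e, y} \<in> E" for y
  proof (rule ccontr)
    assume ynp: "y \<noteq> p"
    have yne: "y \<noteq> e" using edgeW[OF g ey] by auto
    show False
    proof (cases "y \<in> set L0")
      case True
      then obtain xs zs where L0: "L0 = xs @ y # zs" by (meson split_list)
      have "\<not> acyclic_graph E"
      proof (rule cyc[of "y # zs @ [p, e]"])
        show "distinct (y # zs @ [p, e])" using dL unfolding L L0 by simp
        show "successively (\<lambda>x y. {x, y} \<in> E) (y # zs @ [p, e])" using sL unfolding L L0 R_def
          by (simp add: successively_append_iff)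
        show "{last (y # zs @ [p, e]), hd (y # zs @ [p, e])} \<in> E" using ey by (simp add: insert_commute)
      qed simp
      thus False using acyc by simp
    next
      case False
      hence ynL: "y \<notin> set (T @ r)" unfolding L using ynp yne by simp
      show False
      proof (cases "y \<in> set ps")
        case False
        have "r @ [y] \<in> C" unfolding C_def using rC False ynL ey unfolding C_def R_def e_def
          by (auto simp: successively_append_iff)
        from rmax[OF this] show False by simp
      next
        case True
        hence "y \<in> set (drop (Suc j) ps)" using setps ynL by auto
        then obtain s1 s2 where ds: "drop (Suc j) ps = s1 @ y # s2" by (meson split_list)
        have ps2: "ps = take j ps @ b # s1 @ y # s2" using psd ds by simp
        have "\<not> acyclic_graph E"
        proof (rule cyc[of "rev r @ b # s1 @ [y]"])
          have D: "distinct (take j ps @ b # s1 @ y # s2)" using dps ps2 by argo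
          hence "distinct (b # s1 @ [y])" by simp
          moreover have "distinct r" using dL by simp
          moreover have "set r \<inter> set (b # s1 @ [y]) = {}"
          proof -
            have "set ps = set (take j ps @ b # s1 @ y # s2)" using ps2 by argo
            hence "set (b # s1 @ [y]) \<subseteq> set ps" by auto
            thus ?thesis using rdisj by blast
          qed
          ultimately show "distinct (rev r @ b # s1 @ [y])" by auto
          have s1: "successively R (b # s1 @ [y])" proof -
            have "successively R (take j ps @ (b # s1 @ [y]) @ s2)" using sps ps2 unfolding R_def by simp
            thus ?thesis by (simp only: successively_append_iff)
          qed
          have s2: "successively R (rev r)" using sL succ_sym[of E r] unfolding R_def
            by (simp add: successively_append_iff)
          have s3: "R b (hd r)" using sL rne unfolding Tb by (auto simp: successively_append_iff successively_Cons)
          show "successively (\<lambda>x y. {x, y} \<in> E) (rev r @ b # s1 @ [y])"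
            using s1 s2 s3 rne unfolding R_def by (auto simp: successively_append_iff hd_rev last_rev insert_commute)
          show "3 \<le> length (rev r @ b # s1 @ [y])" using rne by (cases r) auto
          show "{last (rev r @ b # s1 @ [y]), hd (rev r @ b # s1 @ [y])} \<in> E"
            using ey rne unfolding e_def by (simp add: hd_rev insert_commute)
        qed
        thus False using acyc by simp
      qed
    qed
  qed
  have "{x \<in> E. e \<in> x} = {{e, p}}"
  proof
    show "{{e, p}} \<subseteq> {x \<in> E. e \<in> x}" using pe by (simp add: insert_commute)
    show "{x \<in> E. e \<in> x} \<subseteq> {{e, p}}"
    proof
      fix x assume "x \<in> {x \<in> E. e \<in> x}"
      then obtain y where "x = {e, y}" "x \<in> E" using edge_form[OF g] by blast
      thus "x \<in> {{e, p}}" using nb by auto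
    qed
  qed
  hence "degree E e = 1" unfolding degree_def by simp
  thus ?thesis using rne rdisj dL sL eW unfolding e_def T_def R_def by blast
qed


lemma cross:
  assumes "(x, y) \<in> {(a, b). {a, b} \<in> E}\<^sup>*" "x \<notin> S" "y \<in> S"
  shows "\<exists>a b. a \<notin> S \<and> b \<in> S \<and> {b, a} \<in> E"
  using assms
proof (induction rule: converse_rtrancl_induct)
  case base then show ?case by simp
next
  case (step x z)
  show ?case
  proof (cases "z \<in> S")
    case True then show ?thesis using step by (auto simp: insert_commute)
  next
    case False then show ?thesis using step by blast
  qed
qed

lemma path_edges:
  assumes d: "distinct P" and s: "successively (\<lambda>x y. {x,y} \<in> E) P" and acyc: "acyclic_graph E"
    and ik: "i < k" "k < length P" and e: "{P ! i, P ! k} \<in> E"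
  shows "k = Suc i"
proof (rule ccontr)
  assume "k \<noteq> Suc i"
  define c where "c = drop i (take (Suc k) P)"
  have lc: "length c = Suc k - i" using ik unfolding c_def by simp
  have cn: "\<And>m. m < length c \<Longrightarrow> c ! m = P ! (i + m)" unfolding c_def using ik by simp
  have "\<not> acyclic_graph E"
  proof (rule cyc[of c])
    show "distinct c" unfolding c_def using d by simp
    show "3 \<le> length c" using lc ik \<open>k \<noteq> Suc i\<close> by simp
    show "successively (\<lambda>x y. {x, y} \<in> E) c" unfolding successively_conv_nth
    proof (intro allI impI)
      fix m assume m: "Suc m < length c"
      have "{P ! (i + m), P ! Suc (i + m)} \<in> E" using successively_nth[OF s] m lc ik by simp
      thus "{c ! m, c ! Suc m} \<in> E" using cn m by simp
    qed
    have "length c > 0" using lc ik by simp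
    hence "c \<noteq> []" by auto
    hence "hd c = P ! i" "last c = P ! k" using cn lc ik by (simp_all add: hd_conv_nth last_conv_nth)
    thus "{last c, hd c} \<in> E" using e by (simp add: insert_commute)
  qed
  thus False using acyc by simp
qed


theorem lemma2:
  fixes V :: "'a set" and t :: "'a set set" and n k :: nat and u w :: 'a
    and Vuw Vu Vw :: "'a set"
  assumes "finite V" and "card V = n"
    and "k > 0"
    and "u \<in> V" and "w \<in> V" and "u \<noteq> w"
    and "Vuw \<subseteq> V - {u, w}" and "card Vuw = k"
    and "Vuw = Vu \<union> Vw" and "Vu \<inter> Vw = {}"
    and "spanning_tree V t"
    and "card (leaves V t) \<le> k"
    and "\<forall>v\<in>Vu. \<forall>y. {v, y} \<in> t \<longleftrightarrow> y = u"
    and "\<forall>v\<in>Vw. \<forall>y. {v, y} \<in> t \<longleftrightarrow> y = w"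
  shows "hamiltonian_path (V - Vuw) (delete_vertices t Vuw) \<and> card (V - Vuw) = n - k"
proof -
  note fV = assms(1) and uV = assms(4) and wV = assms(5) and uw = assms(6) and sub = assms(7)
    and cardk = assms(8) and Vuw = assms(9) and st = assms(11) and lv = assms(12)
    and hu = assms(13) and hw = assms(14)
  define W where "W = V - Vuw"
  define E where "E = delete_vertices t Vuw"
  have gt: "graph_on V t" and ct: "connected_on V t" and at: "acyclic_graph t"
    using st unfolding spanning_tree_def by auto
  have Esub: "E \<subseteq> t" unfolding E_def delete_vertices_def by auto
  have finW: "finite W" using fV unfolding W_def by simp
  have uW: "u \<in> W" and wW: "w \<in> W" using uV wV sub unfolding W_def by auto
  have g: "graph_on W E"
    unfolding graph_on_def
  proof
    fix e assume "e \<in> E"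
    then have e: "e \<in> t" "e \<inter> Vuw = {}" by (auto simp: E_def delete_vertices_def)
    then obtain x y where "e = {x,y}" "x \<in> V" "y \<in> V" "x \<noteq> y" using gt unfolding graph_on_def by blast
    thus "e \<in> {{x, y} |x y. x \<in> W \<and> y \<in> W \<and> x \<noteq> y}" using e(2) unfolding W_def by auto
  qed
  have acyc: "acyclic_graph E"
    unfolding acyclic_graph_def
  proof
    assume "\<exists>cs. is_cycle E cs"
    then obtain cs where "is_cycle E cs" by blast
    hence "is_cycle t cs" using Esub unfolding is_cycle_def by (meson subsetD)
    thus False using at unfolding acyclic_graph_def by blast
  qed
  have conn: "(x, y) \<in> {(a, b). {a, b} \<in> E}\<^sup>*" if "x \<in> W" "y \<in> W" for x y
  proof -
    have xy: "(x, y) \<in> {(a, b). {a, b} \<in> t}\<^sup>*" using ct that unfolding connected_on_def W_def by auto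
    have "\<forall>z. (x, z) \<in> {(a, b). {a, b} \<in> t}\<^sup>* \<longrightarrow>
      (z \<in> W \<longrightarrow> (x, z) \<in> {(a, b). {a, b} \<in> E}\<^sup>*) \<and>
      (z \<in> Vu \<longrightarrow> (x, u) \<in> {(a, b). {a, b} \<in> E}\<^sup>*) \<and>
      (z \<in> Vw \<longrightarrow> (x, w) \<in> {(a, b). {a, b} \<in> E}\<^sup>*)"
    proof (intro allI impI)
      fix z assume "(x, z) \<in> {(a, b). {a, b} \<in> t}\<^sup>*"
      then show "(z \<in> W \<longrightarrow> (x, z) \<in> {(a, b). {a, b} \<in> E}\<^sup>*) \<and>
      (z \<in> Vu \<longrightarrow> (x, u) \<in> {(a, b). {a, b} \<in> E}\<^sup>*) \<and>
      (z \<in> Vw \<longrightarrow> (x, w) \<in> {(a, b). {a, b} \<in> E}\<^sup>*)"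
      proof (induction rule: rtrancl_induct)
        case base
        then show ?case using that(1) Vuw unfolding W_def by auto
      next
        case (step z z')
        have zz: "{z, z'} \<in> t" using step(2) by simp
        have zV: "z \<in> V" "z' \<in> V" using edgeW[OF gt zz] by auto
        show ?case
        proof (cases "z \<in> W")
          case zW: True
          show ?thesis
          proof (intro conjI impI)
            assume z'W: "z' \<in> W"
            have "{z, z'} \<in> E" using zz zW z'W unfolding E_def delete_vertices_def W_def by auto
            thus "(x, z') \<in> {(a, b). {a, b} \<in> E}\<^sup>*" using step(3) zW
              by (meson case_prodI mem_Collect_eq rtrancl.rtrancl_into_rtrancl)
          next
            assume "z' \<in> Vu"
            hence "z = u" using hu zz by (metis insert_commute)
            thus "(x, u) \<in> {(a, b). {a, b} \<in> E}\<^sup>*" using step(3) zW by simp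
          next
            assume "z' \<in> Vw"
            hence "z = w" using hw zz by (metis insert_commute)
            thus "(x, w) \<in> {(a, b). {a, b} \<in> E}\<^sup>*" using step(3) zW by simp
          qed
        next
          case zW: False
          hence zVuw: "z \<in> Vu \<or> z \<in> Vw" using zV Vuw unfolding W_def by auto
          show ?thesis
          proof (cases "z \<in> Vu")
            case True
            hence "z' = u" using hu zz by auto
            thus ?thesis using step(3) True uW Vuw sub assms(10) unfolding W_def by auto
          next
            case False
            hence "z \<in> Vw" using zVuw by simp
            hence "z' = w" using hw zz by auto
            thus ?thesis using step(3) \<open>z \<in> Vw\<close> wW Vuw sub assms(10) unfolding W_def by auto
          qed
        qed
      qed
    qed
    thus ?thesis using xy that(2) by blast
  qed
  have finVuw: "finite Vuw" using fV sub finite_subset by blast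
  have lvs: "leaves V t = Vuw"
  proof -
    have "Vuw \<subseteq> leaves V t"
    proof
      fix v assume v: "v \<in> Vuw"
      obtain z where z: "\<forall>y. {v, y} \<in> t \<longleftrightarrow> y = z"
      proof (cases "v \<in> Vu")
        case True then show ?thesis using that hu by blast
      next
        case False then have "v \<in> Vw" using v Vuw by simp
        then show ?thesis using that hw by blast
      qed
      have "{e \<in> t. v \<in> e} = {{v, z}}"
      proof
        show "{e \<in> t. v \<in> e} \<subseteq> {{v, z}}"
        proof
          fix e assume e: "e \<in> {e \<in> t. v \<in> e}"
          then obtain y where ey: "e = {v, y}" using edge_form[OF gt] by blast
          hence "y = z" using z e by simp
          thus "e \<in> {{v, z}}" using ey by simp
        qed
        show "{{v, z}} \<subseteq> {e \<in> t. v \<in> e}" using z by auto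
      qed
      thus "v \<in> leaves V t" using v sub unfolding leaves_def degree_def by auto
    qed
    moreover have "finite (leaves V t)" using fV unfolding leaves_def by simp
    ultimately show ?thesis using lv cardk card_seteq[of "leaves V t" Vuw] by (metis order_refl)
  qed
  have deg: "x = u \<or> x = w" if "x \<in> W" "degree E x = 1" for x
  proof (rule ccontr)
    assume nx: "\<not> (x = u \<or> x = w)"
    have "{e \<in> E. x \<in> e} = {e \<in> t. x \<in> e}"
    proof
      show "{e \<in> E. x \<in> e} \<subseteq> {e \<in> t. x \<in> e}" using Esub by auto
      show "{e \<in> t. x \<in> e} \<subseteq> {e \<in> E. x \<in> e}"
      proof
        fix e assume e: "e \<in> {e \<in> t. x \<in> e}"
        then obtain y where ey: "e = {x, y}" using edge_form[OF gt] by blast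
        have et: "{y, x} \<in> t" using e ey by (simp add: insert_commute)
        have "y \<notin> Vu"
        proof
          assume "y \<in> Vu" hence "x = u" using hu et by blast
          thus False using nx by simp
        qed
        moreover have "y \<notin> Vw"
        proof
          assume "y \<in> Vw" hence "x = w" using hw et by blast
          thus False using nx by simp
        qed
        ultimately show "e \<in> {e \<in> E. x \<in> e}" using e ey that(1) Vuw
          unfolding E_def delete_vertices_def W_def by auto
      qed
    qed
    hence "degree t x = 1" using that(2) unfolding degree_def by simp
    hence "x \<in> Vuw" using that(1) lvs unfolding W_def leaves_def by blast
    thus False using that(1) unfolding W_def by simp
  qed
  have uwR: "(u, w) \<in> {(a, b). {a, b} \<in> E}\<^sup>*" using conn[OF uW wW] .
  have "\<exists>a. {u, a} \<in> E"
  proof (rule converse_rtranclE[OF uwR])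
    assume "u = w" with uw show ?thesis by simp
  next
    fix y assume "(u, y) \<in> {(a, b). {a, b} \<in> E}"
    then show ?thesis by auto
  qed
  then obtain a where ua: "{u, a} \<in> E" by blast
  have "a \<noteq> u" using edgeW[OF g ua] by auto
  have "\<exists>r. r \<noteq> [] \<and> set r \<inter> set [u] = {} \<and> distinct (take (Suc 0) [u] @ r)
     \<and> successively (\<lambda>x y. {x,y} \<in> E) (take (Suc 0) [u] @ r) \<and> degree E (last r) = 1 \<and> last r \<in> W"
    by (rule ext[OF finW g acyc]) (use ua \<open>a \<noteq> u\<close> in auto)
  then obtain r where r: "r \<noteq> []" "set r \<inter> set [u] = {}" "distinct ([u] @ r)"
    "successively (\<lambda>x y. {x,y} \<in> E) ([u] @ r)" "degree E (last r) = 1" "last r \<in> W"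
    by auto
  define P where "P = u # r"
  have dP: "distinct P" and sP: "successively (\<lambda>x y. {x,y} \<in> E) P" using r unfolding P_def by auto
  have lP: "last r = w" using deg[OF r(6) r(5)] r(1,2) by auto
  have hdP: "u \<in> set P" and lastP: "w \<in> set P" using lP r(1) unfolding P_def by auto
  have PW: "set P \<subseteq> W" using succ_W[OF sP g] r(1) unfolding P_def by (cases r) auto
  have setP: "set P = W"
  proof (rule ccontr)
    assume "set P \<noteq> W"
    then obtain x where x: "x \<in> W" "x \<notin> set P" using PW by blast
    obtain a b where ab: "a \<notin> set P" "b \<in> set P" "{b, a} \<in> E"
      using cross[OF conn[OF x(1) uW] x(2) hdP] by blast
    obtain j where j: "j < length P" "P ! j = b" using ab(2) by (meson in_set_conv_nth)
    obtain r' where r': "r' \<noteq> []" "set r' \<inter> set P = {}" "degree E (last r') = 1" "last r' \<in> W"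
      using ext[OF finW g acyc dP sP j(1), of a] ab j by blast
    have "last r' \<notin> set P" using r'(1,2) last_in_set by blast
    thus False using deg[OF r'(4,3)] hdP lastP by auto
  qed
  have Eeq: "E = {{P ! i, P ! Suc i} | i. Suc i < length P}"
  proof
    show "{{P ! i, P ! Suc i} | i. Suc i < length P} \<subseteq> E"
      using successively_nth[OF sP] by blast
    show "E \<subseteq> {{P ! i, P ! Suc i} | i. Suc i < length P}"
    proof
      fix e assume e: "e \<in> E"
      then obtain p q where pq: "e = {p, q}" using g unfolding graph_on_def by blast
      have pW: "p \<in> W" "q \<in> W" "p \<noteq> q" using edgeW[OF g] e pq by auto
      obtain i where i: "i < length P" "P ! i = p" using pW setP by (metis in_set_conv_nth)
      obtain l where l: "l < length P" "P ! l = q" using pW setP by (metis in_set_conv_nth)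
      have "i \<noteq> l" using i l pW by auto
      show "e \<in> {{P ! i, P ! Suc i} | i. Suc i < length P}"
      proof (cases "i < l")
        case True
        hence "l = Suc i" using path_edges[OF dP sP acyc True l(1)] e pq i l by simp
        thus ?thesis using pq i l by auto
      next
        case False
        hence "l < i" using \<open>i \<noteq> l\<close> by simp
        hence "i = Suc l" using path_edges[OF dP sP acyc \<open>l < i\<close> i(1)] e pq i l by (simp add: insert_commute)
        thus ?thesis using pq i l by (auto simp: insert_commute)
      qed
    qed
  qed
  have "hamiltonian_path W E" unfolding hamiltonian_path_def using dP setP Eeq by blast
  moreover have "card W = n - k" unfolding W_def using card_Diff_subset[OF finVuw] sub cardk assms(2) by auto
  ultimately show ?thesis unfolding W_def E_def by simp
qed

end
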